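(* In the multi-parameter setting described in the context, $H(\theta)\le C_\Upsilon(\theta)$ as $m\times m$ real symmetric matrices, i.e. $v^TH(\theta)v\le v^TC_\Upsilon(\theta)v$ for all $v\in\mathbb{R}^m$.
   Context: A multi-parameter quantum channel on density matrices on $\mathbb{C}^d$ is $\rho_0\mapsto\sum_kE_k(\theta)\rho_0E_k(\theta)^\dagger$ with $\theta=(\theta^1,\dots,\theta^m)\in\mathbb{R}^m$, Kraus operators differentiable in $\theta$, $\sum_kE_k^\dagger E_k=I$. The input is a fixed pure state $\rho_0=|\psi_0\rangle\langle\psi_0|$. Canonical Kraus operators $\{\Upsilon_k(\theta)\}_{k=1}^d$: a differentiable Kraus representation of the same channel with $\mathrm{tr}\{\Upsilon_k\rho_0\Upsilon_j^\dagger\}=\delta_{jk}p_k(\theta)$; the output is $\rho_{out}(\theta)=\sum_kp_k(\theta)|w_k(\theta)\rangle\langle w_k(\theta)|$ with $\{|w_k(\theta)\rangle\}$ an orthonormal basis differentiable in $\theta$ and $|w_k\rangle=p_k^{-1/2}\Upsilon_k|\psi_0\rangle$ when $p_k>0$. Write $X^{(j)}=\partial X/\partial\theta^j$. The multi-parameter SM bound is the matrix $C_\Upsilon(\theta)_{jk}=4\sum_l\mathrm{Re}\,\mathrm{tr}\{\Upsilon_l^{(j)}\rho_0\Upsilon_l^{(k)\dagger}\}$. The SLD quantum information matrix is $H(\theta)_{jk}=\mathrm{Re}\,\mathrm{tr}\{\lambda^{(j)}\rho_{out}\lambda^{(k)}\}$, where $\lambda^{(j)}$ is a self-adjoint solution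 of $\partial\rho_{out}/\partial\theta^j=\frac12(\rho_{out}\lambda^{(j)}+\lambda^{(j)}\rho_{out})$. *)

theory Defs
  imports "HOL-Analysis.Analysis"
begin


definition adj :: "complex^'d^'d \<Rightarrow> complex^'d^'d" where
  "adj A = (\<chi> i j. cnj (A $ j $ i))"

definition cinner :: "complex^'d \<Rightarrow> complex^'d \<Rightarrow> complex" where
  "cinner u v = (\<Sum>i\<in>UNIV. cnj (u $ i) * v $ i)"

definition ketbra :: "complex^'d \<Rightarrow> complex^'d \<Rightarrow> complex^'d^'d" where
  "ketbra u v = (\<chi> i j. u $ i * cnj (v $ j))"

definition pderiv :: "(real^'m \<Rightarrow> 'a::real_normed_vector) \<Rightarrow> real^'m \<Rightarrow> 'm \<Rightarrow> 'a" where
  "pderiv f \<theta> j = frechet_derivative f (at \<theta>) (axis j 1)"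

definition kraus_apply :: "('k::finite \<Rightarrow> complex^'d^'d) \<Rightarrow> complex^'d^'d \<Rightarrow> complex^'d^'d" where
  "kraus_apply K \<rho> = (\<Sum>k\<in>UNIV. K k ** \<rho> ** adj (K k))"

definition SM_bound :: "('d::finite \<Rightarrow> real^'m \<Rightarrow> complex^'d^'d) \<Rightarrow> complex^'d^'d \<Rightarrow> real^'m \<Rightarrow> real^'m^'m" where
  "SM_bound U \<rho>0 \<theta> = (\<chi> j k. 4 * (\<Sum>l\<in>UNIV.
       Re (trace (pderiv (U l) \<theta> j ** \<rho>0 ** adj (pderiv (U l) \<theta> k)))))"

definition SLD_info :: "('m::finite \<Rightarrow> complex^'d^'d) \<Rightarrow> complex^'d^'d \<Rightarrow> real^'m^'m" where
  "SLD_info L \<rho> = (\<chi> j k. Re (trace (L j ** \<rho> ** L k)))"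

end

theory Submission imports Defs begin

lemma adj_add: "adj (A + B) = adj A + adj B"
  by (simp add: adj_def vec_eq_iff)
lemma adj_scaleR: "adj (r *\<^sub>R A) = r *\<^sub>R adj A"
  by (simp add: adj_def vec_eq_iff)
lemma adj_adj: "adj (adj A) = A"
  by (simp add: adj_def vec_eq_iff)
lemma adj_mult: "adj (A ** B) = adj B ** adj (A :: complex^'d^'d)"
  by (simp add: adj_def vec_eq_iff matrix_matrix_mult_def mult.commute)
lemma adj_sum: "adj (\<Sum>i\<in>S. f i) = (\<Sum>i\<in>S. adj (f i))"
  by (induction S rule: infinite_finite_induct) (auto simp: adj_add adj_def vec_eq_iff)
lemma mm_scaleR_left: "(r *\<^sub>R A) ** B = r *\<^sub>R (A ** (B::complex^'n^'p))"
  by (simp add: vec_eq_iff matrix_matrix_mult_def scaleR_sum_right)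
lemma mm_scaleR_right: "A ** (r *\<^sub>R B) = r *\<^sub>R (A ** (B::complex^'n^'p))"
  by (simp add: vec_eq_iff matrix_matrix_mult_def scaleR_sum_right)
lemma mm_add_rdistrib: "(A + B) ** (C::'a::semiring_1^'n^'p) = A ** C + B ** (C::'a::semiring_1^'n^'p)"
  by (simp add: vec_eq_iff matrix_matrix_mult_def distrib_right sum.distrib)
lemma mm_sum_left: "(\<Sum>i\<in>S. f i) ** (B::complex^'d^'d) = (\<Sum>i\<in>S. f i ** B)"
  by (induction S rule: infinite_finite_induct) (auto simp: mm_add_rdistrib)
lemma mm_sum_right: "(B::complex^'d^'d) ** (\<Sum>i\<in>S. f i) = (\<Sum>i\<in>S. B ** f i)"
  by (induction S rule: infinite_finite_induct) (auto simp: matrix_add_ldistrib)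
lemma trace_scaleR: "trace (r *\<^sub>R (A::complex^'d^'d)) = r *\<^sub>R trace A"
  by (simp add: trace_def scaleR_sum_right)
lemma trace_sum: "trace (\<Sum>i\<in>S. (f i::complex^'d^'d)) = (\<Sum>i\<in>S. trace (f i))"
  by (induction S rule: infinite_finite_induct) (auto simp: trace_add trace_0[unfolded mat_0])

lemma bil: "bilinear (\<lambda>(A::complex^'d^'d) C. A ** R ** adj C)"
  unfolding bilinear_def
  by (auto intro!: linearI simp: mm_add_rdistrib matrix_add_ldistrib adj_add adj_scaleR mm_scaleR_left mm_scaleR_right)

lemma trace_ket: "trace (A ** ketbra \<psi> \<psi> ** adj C) = cinner (C *v \<psi>) (A *v \<psi>)"
proof -
  have "trace (A ** ketbra \<psi> \<psi> ** adj C) = (\<Sum>i\<in>UNIV. \<Sum>b\<in>UNIV. \<Sum>c\<in>UNIV. A$i$c * \<psi>$c * cnj (\<psi>$b) * cnj (C$i$b))"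
    unfolding trace_def ketbra_def adj_def matrix_matrix_mult_def
    by (simp add: sum_distrib_right sum_distrib_left mult_ac)
  also have "\<dots> = cinner (C *v \<psi>) (A *v \<psi>)"
    unfolding cinner_def matrix_vector_mult_def
    by (simp add: sum_product mult_ac, rule sum.cong, simp, rule sum.swap)
  finally show ?thesis .
qed

lemma cin_ineq: "Re (cinner x a + cinner a x) \<le> (1/2) * Re (cinner a a) + 2 * Re (cinner x x)"
proof -
  have "Re (cnj (x$i) * a$i + cnj (a$i) * x$i) \<le> (1/2) * Re (cnj (a$i) * a$i) + 2 * Re (cnj (x$i) * x$i)" for i
  proof -
    have "0 \<le> (Re (a$i) - 2 * Re (x$i))^2 + (Im (a$i) - 2 * Im (x$i))^2" by simp
    then show ?thesis by (simp add: algebra_simps power2_eq_square)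
  qed
  then have "(\<Sum>i\<in>UNIV. Re (cnj (x$i) * a$i + cnj (a$i) * x$i)) \<le> (\<Sum>i\<in>UNIV. (1/2) * Re (cnj (a$i) * a$i) + 2 * Re (cnj (x$i) * x$i))"
    by (rule sum_mono)
  moreover have "Re (cinner x a + cinner a x) = (\<Sum>i\<in>UNIV. Re (cnj (x$i) * a$i + cnj (a$i) * x$i))"
    unfolding cinner_def Re_sum[symmetric] sum.distrib[symmetric] by (rule refl)
  moreover have "(1/2) * Re (cinner a a) + 2 * Re (cinner x x) = (\<Sum>i\<in>UNIV. (1/2) * Re (cnj (a$i) * a$i) + 2 * Re (cnj (x$i) * x$i))"
    unfolding cinner_def Re_sum sum.distrib sum_distrib_left by (rule refl)
  ultimately show ?thesis by linarith
qed

lemma tr1: "adj R = R \<Longrightarrow> trace ((A ** K ** adj X) ** R) = trace ((R ** A) ** K ** adj (X::complex^'d^'d))"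
  by (metis trace_mul_sym matrix_mul_assoc)

lemma tr2: "adj R = R \<Longrightarrow> trace ((X ** K ** adj A) ** R) = trace (X ** K ** adj ((R::complex^'d^'d) ** A))"
  by (simp add: adj_mult matrix_mul_assoc)

lemma tr3: "adj R = R \<Longrightarrow> R ** (A ** K ** adj A) ** R = (R ** A) ** K ** adj ((R::complex^'d^'d) ** A)"
  by (simp add: adj_mult matrix_mul_assoc)

theorem lemma7:
  fixes E :: "'k::finite \<Rightarrow> real^'m::finite \<Rightarrow> complex^'d::finite^'d"
    and U :: "'d \<Rightarrow> real^'m \<Rightarrow> complex^'d^'d"
    and p :: "'d \<Rightarrow> real^'m \<Rightarrow> real"
    and w :: "'d \<Rightarrow> real^'m \<Rightarrow> complex^'d"
    and \<psi>0 :: "complex^'d"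
    and L :: "'m \<Rightarrow> complex^'d^'d"
    and \<theta> :: "real^'m"
  defines "\<rho>0 \<equiv> ketbra \<psi>0 \<psi>0"
  defines "\<rho>out \<equiv> (\<lambda>t. kraus_apply (\<lambda>k. E k t) \<rho>0)"
  assumes psi_unit: "cinner \<psi>0 \<psi>0 = 1"
    and E_diff: "\<And>k t. E k differentiable (at t)"
    and E_kraus: "\<And>t. (\<Sum>k\<in>UNIV. adj (E k t) ** E k t) = mat 1"
    and U_diff: "\<And>l t. U l differentiable (at t)"
    and U_same: "\<And>t \<rho>. kraus_apply (\<lambda>l. U l t) \<rho> = kraus_apply (\<lambda>k. E k t) \<rho>"
    and U_canon: "\<And>t j k. trace (U k t ** \<rho>0 ** adj (U j t))
                     = (if j = k then complex_of_real (p k t) else 0)"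
    and w_diff: "\<And>k t. w k differentiable (at t)"
    and w_orth: "\<And>t j k. cinner (w j t) (w k t) = (if j = k then 1 else 0)"
    and w_def: "\<And>t k. p k t > 0 \<Longrightarrow> w k t = (1 / sqrt (p k t)) *\<^sub>R (U k t *v \<psi>0)"
    and rho_out_eq: "\<And>t. \<rho>out t = (\<Sum>k\<in>UNIV. p k t *\<^sub>R ketbra (w k t) (w k t))"
    and L_sa: "\<And>j. adj (L j) = L j"
    and L_sld: "\<And>j. pderiv \<rho>out \<theta> j
                  = (1/2 :: real) *\<^sub>R (\<rho>out \<theta> ** L j + L j ** \<rho>out \<theta>)"
  shows "\<forall>v::real^'m. v \<bullet> (SLD_info L (\<rho>out \<theta>) *v v) \<le> v \<bullet> (SM_bound U \<rho>0 \<theta> *v v)"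
proof (intro allI)
  define Bf where "Bf = (\<lambda>(P::complex^'d^'d) Q. P ** \<rho>0 ** adj Q)"
  have bb: "bounded_bilinear Bf"
    unfolding Bf_def using bil bilinear_conv_bounded_bilinear by blast
  define DU where "DU l = frechet_derivative (U l) (at \<theta>)" for l
  have hasD: "(U l has_derivative DU l) (at \<theta>)" for l
    unfolding DU_def using U_diff frechet_derivative_works by blast
  have lin: "linear (DU l)" for l using hasD has_derivative_linear by blast
  have rho_form: "\<rho>out = (\<lambda>t. \<Sum>l\<in>UNIV. Bf (U l t) (U l t))"
    unfolding \<rho>out_def Bf_def using U_same[symmetric] by (simp add: kraus_apply_def)
  have deriv: "(\<rho>out has_derivative (\<lambda>h. \<Sum>l\<in>UNIV. Bf (U l \<theta>) (DU l h) + Bf (DU l h) (U l \<theta>))) (at \<theta>)"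
  proof -
    have "((\<lambda>t. Bf (U l t) (U l t)) has_derivative (\<lambda>h. Bf (U l \<theta>) (DU l h) + Bf (DU l h) (U l \<theta>))) (at \<theta>)" for l
      using bounded_bilinear.FDERIV[OF bb hasD hasD] by simp
    then show ?thesis unfolding rho_form by (rule has_derivative_sum)
  qed
  have pd: "pderiv \<rho>out \<theta> j = (\<Sum>l\<in>UNIV. Bf (U l \<theta>) (DU l (axis j 1)) + Bf (DU l (axis j 1)) (U l \<theta>))" for j
    by (simp add: pderiv_def frechet_derivative_at[OF deriv, symmetric])
  fix v :: "real^'m"
  define X where "X l = (\<Sum>j\<in>UNIV. v$j *\<^sub>R DU l (axis j 1))" for l
  define \<Lambda> where "\<Lambda> = (\<Sum>j\<in>UNIV. v$j *\<^sub>R L j)"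
  define A where "A l = U l \<theta>" for l
  define \<rho> where "\<rho> = \<rho>out \<theta>"
  have \<rho>_eq: "\<rho> = (\<Sum>l\<in>UNIV. Bf (A l) (A l))" unfolding \<rho>_def A_def rho_form by simp
  have Lsa: "adj \<Lambda> = \<Lambda>" unfolding \<Lambda>_def by (simp add: adj_sum adj_scaleR L_sa)
  have rhoD: "(\<Sum>j\<in>UNIV. v$j *\<^sub>R pderiv \<rho>out \<theta> j) = (\<Sum>l\<in>UNIV. Bf (A l) (X l) + Bf (X l) (A l))"
  proof -
    have "(\<Sum>j\<in>UNIV. v$j *\<^sub>R pderiv \<rho>out \<theta> j) = (\<Sum>j\<in>UNIV. \<Sum>l\<in>UNIV. v$j *\<^sub>R (Bf (A l) (DU l (axis j 1)) + Bf (DU l (axis j 1)) (A l)))"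
      unfolding pd A_def by (simp only: scaleR_sum_right)
    also have "\<dots> = (\<Sum>l\<in>UNIV. \<Sum>j\<in>UNIV. v$j *\<^sub>R (Bf (A l) (DU l (axis j 1)) + Bf (DU l (axis j 1)) (A l)))"
      by (rule sum.swap)
    also have "\<dots> = (\<Sum>l\<in>UNIV. Bf (A l) (X l) + Bf (X l) (A l))"
    proof (rule sum.cong[OF refl])
      fix l
      show "(\<Sum>j\<in>UNIV. v$j *\<^sub>R (Bf (A l) (DU l (axis j 1)) + Bf (DU l (axis j 1)) (A l))) = Bf (A l) (X l) + Bf (X l) (A l)"
        unfolding X_def bounded_bilinear.sum_right[OF bb] bounded_bilinear.sum_left[OF bb]
          bounded_bilinear.scaleR_right[OF bb] bounded_bilinear.scaleR_left[OF bb]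
        by (simp only: scaleR_add_right sum.distrib)
    qed
    finally show ?thesis .
  qed
  have rhoD2: "(\<Sum>j\<in>UNIV. v$j *\<^sub>R pderiv \<rho>out \<theta> j) = (1/2::real) *\<^sub>R (\<rho> ** \<Lambda> + \<Lambda> ** \<rho>)"
    unfolding L_sld \<Lambda>_def \<rho>_def
    by (simp add: mm_sum_right mm_sum_left mm_scaleR_left mm_scaleR_right scaleR_sum_right
        sum.distrib scaleR_add_right)
  have LHS: "v \<bullet> (SLD_info L (\<rho>out \<theta>) *v v) = Re (trace (\<Lambda> ** \<rho> ** \<Lambda>))"
  proof -
    have T: "trace (\<Lambda> ** \<rho> ** \<Lambda>) = (\<Sum>k\<in>UNIV. \<Sum>j\<in>UNIV. (v$k * v$j) *\<^sub>R trace (L j ** \<rho> ** L k))"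
      unfolding \<Lambda>_def
      by (simp only: mm_sum_left mm_sum_right mm_scaleR_left mm_scaleR_right trace_sum trace_scaleR
          scaleR_sum_right scaleR_scaleR)
    have "Re (trace (\<Lambda> ** \<rho> ** \<Lambda>)) = (\<Sum>k\<in>UNIV. \<Sum>j\<in>UNIV. (v$k * v$j) * Re (trace (L j ** \<rho> ** L k)))"
      unfolding T by (simp add: Re_sum)
    also have "\<dots> = (\<Sum>j\<in>UNIV. \<Sum>k\<in>UNIV. (v$k * v$j) * Re (trace (L j ** \<rho> ** L k)))"
      by (rule sum.swap)
    also have "\<dots> = v \<bullet> (SLD_info L (\<rho>out \<theta>) *v v)"
      unfolding \<rho>_def inner_vec_def matrix_vector_mult_def SLD_info_def
      by (simp add: sum_distrib_left mult_ac)
    finally show ?thesis by simp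
  qed
  have RHS: "v \<bullet> (SM_bound U \<rho>0 \<theta> *v v) = 4 * (\<Sum>l\<in>UNIV. Re (trace (Bf (X l) (X l))))"
  proof -
    have T: "trace (Bf (X l) (X l)) = (\<Sum>k\<in>UNIV. \<Sum>j\<in>UNIV. (v$k * v$j) *\<^sub>R trace (Bf (DU l (axis j 1)) (DU l (axis k 1))))" for l
      unfolding X_def
      by (simp add: bounded_bilinear.sum_left[OF bb] bounded_bilinear.sum_right[OF bb]
          bounded_bilinear.scaleR_left[OF bb] bounded_bilinear.scaleR_right[OF bb] trace_sum trace_scaleR
          scaleR_sum_right)
    have "4 * (\<Sum>l\<in>UNIV. Re (trace (Bf (X l) (X l)))) = 4 * (\<Sum>l\<in>UNIV. \<Sum>k\<in>UNIV. \<Sum>j\<in>UNIV. (v$k * v$j) * Re (trace (Bf (DU l (axis j 1)) (DU l (axis k 1)))))"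
      unfolding T by (simp add: Re_sum)
    also have "\<dots> = 4 * (\<Sum>k\<in>UNIV. \<Sum>l\<in>UNIV. \<Sum>j\<in>UNIV. (v$k * v$j) * Re (trace (Bf (DU l (axis j 1)) (DU l (axis k 1)))))"
      by (subst sum.swap, rule refl)
    also have "\<dots> = 4 * (\<Sum>k\<in>UNIV. \<Sum>j\<in>UNIV. \<Sum>l\<in>UNIV. (v$k * v$j) * Re (trace (Bf (DU l (axis j 1)) (DU l (axis k 1)))))"
      by (rule arg_cong[where f="\<lambda>x. 4 * x"], rule sum.cong[OF refl], rule sum.swap)
    also have "\<dots> = 4 * (\<Sum>j\<in>UNIV. \<Sum>k\<in>UNIV. \<Sum>l\<in>UNIV. (v$k * v$j) * Re (trace (Bf (DU l (axis j 1)) (DU l (axis k 1)))))"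
      by (subst sum.swap, rule refl)
    also have "\<dots> = v \<bullet> (SM_bound U \<rho>0 \<theta> *v v)"
      unfolding inner_vec_def matrix_vector_mult_def SM_bound_def Bf_def pderiv_def DU_def
      by (simp add: sum_distrib_left sum_distrib_right mult_ac)
    finally show ?thesis by simp
  qed
  show "v \<bullet> (SLD_info L (\<rho>out \<theta>) *v v) \<le> v \<bullet> (SM_bound U \<rho>0 \<theta> *v v)"
  proof -
    define a where "a l = (\<Lambda> ** A l) *v \<psi>0" for l
    define x where "x l = X l *v \<psi>0" for l
    have tk: "trace (Bf P Q) = cinner (Q *v \<psi>0) (P *v \<psi>0)" for P Q
      unfolding Bf_def \<rho>0_def by (rule trace_ket)
    have F: "Re (trace (\<Lambda> ** \<rho> ** \<Lambda>)) = (\<Sum>l\<in>UNIV. Re (cinner (a l) (a l)))"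
    proof -
      have "\<Lambda> ** \<rho> ** \<Lambda> = (\<Sum>l\<in>UNIV. Bf (\<Lambda> ** A l) (\<Lambda> ** A l))"
        unfolding \<rho>_eq by (simp add: mm_sum_left mm_sum_right Bf_def tr3[OF Lsa])
      then show ?thesis by (simp add: trace_sum Re_sum tk a_def)
    qed
    define \<rho>' where "\<rho>' = (\<Sum>j\<in>UNIV. v$j *\<^sub>R pderiv \<rho>out \<theta> j)"
    have G1: "Re (trace (\<rho>' ** \<Lambda>)) = Re (trace (\<Lambda> ** \<rho> ** \<Lambda>))"
    proof -
      have "trace (\<rho> ** \<Lambda> ** \<Lambda>) = trace (\<Lambda> ** \<rho> ** \<Lambda>)"
        by (metis trace_mul_sym matrix_mul_assoc)
      then show ?thesis unfolding \<rho>'_def rhoD2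
        by (simp add: mm_scaleR_left mm_add_rdistrib trace_scaleR trace_add)
    qed
    have G2: "Re (trace (\<rho>' ** \<Lambda>)) = (\<Sum>l\<in>UNIV. Re (cinner (x l) (a l) + cinner (a l) (x l)))"
    proof -
      have "trace (Bf (A l) (X l) ** \<Lambda>) = cinner (x l) (a l)" for l
        unfolding Bf_def by (simp add: tr1[OF Lsa] tk[unfolded Bf_def] x_def a_def)
      moreover have "trace (Bf (X l) (A l) ** \<Lambda>) = cinner (a l) (x l)" for l
        unfolding Bf_def by (simp add: tr2[OF Lsa] tk[unfolded Bf_def] x_def a_def)
      ultimately show ?thesis unfolding \<rho>'_def rhoD
        by (simp add: mm_sum_left mm_add_rdistrib trace_sum trace_add Re_sum)
    qed
    have R: "v \<bullet> (SM_bound U \<rho>0 \<theta> *v v) = 4 * (\<Sum>l\<in>UNIV. Re (cinner (x l) (x l)))"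
      unfolding RHS by (simp add: tk x_def)
    have I: "(\<Sum>l\<in>UNIV. Re (cinner (x l) (a l) + cinner (a l) (x l))) \<le>
        (\<Sum>l\<in>UNIV. (1/2) * Re (cinner (a l) (a l)) + 2 * Re (cinner (x l) (x l)))"
      by (rule sum_mono) (rule cin_ineq)
    have S: "(\<Sum>l\<in>UNIV. (1/2) * Re (cinner (a l) (a l)) + 2 * Re (cinner (x l) (x l)))
        = (1/2) * (\<Sum>l\<in>UNIV. Re (cinner (a l) (a l))) + 2 * (\<Sum>l\<in>UNIV. Re (cinner (x l) (x l)))"
      by (simp add: sum.distrib sum_distrib_left)
    show ?thesis using I F G1 G2 R LHS S by linarith
  qed
qed

end
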